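(* Let $w = w_1 w_2 w_3 \cdots$ be any infinite binary word, and define $$r_{\inf}(w) = \liminf_{n \to \infty} \frac{|Z(w^{(n)})|}{n},\quad r_{\sup}(w) = \limsup_{n \to \infty} \frac{|Z(w^{(n)})|}{n},$$ $$R_{\inf}(w) = \liminf_{n \to \infty} \frac{|P(w^{(n)})|}{n},\quad R_{\sup}(w) = \limsup_{n \to \infty} \frac{|P(w^{(n)})|}{n}.$$ Then $$\frac{5 r_{\inf}(w) - 2}{3} \leq R_{\inf}(w) \leq r_{\inf}(w) \quad\text{and}\quad \frac{5 r_{\sup}(w) - 2}{3} \leq R_{\sup}(w) \leq r_{\sup}(w).$$ Moreover, for every real number $2/5 \leq r \leq 1$ there exists an infinite binary word $w$ with $r_{\inf}(w) = r_{\sup}(w) = r$ and $R_{\inf}(w) = R_{\sup}(w) = (5r-2)/3$; and for every real number $0 \leq r \leq 1$ there exists an infinite binary word $w$ with $r_{\inf}(w) = r_{\sup}(w) = r$ and $R_{\inf}(w) = R_{\sup}(w) = r$.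
   Context: For a finite or infinite binary word $w = w_1 w_2 \cdots$ ($w_i \in \{0,1\}$), $\ell(w)$ is its length and $w^{(n)}$ denotes its initial subword of length $n$. $Z(w)$ is the set of indices $i$ with $w_i = 0$. $P(w)$ is the set of indices $i \geq 2$ such that at least one of the following holds: (i) $\ell(w) \geq i$ and $w_{i-1} w_i = 00$; (ii) $\ell(w) \geq i+2$ and $w_{i-1} w_i w_{i+1} w_{i+2} = 0100$; (iii) $\ell(w) \geq i+3$ and $w_{i-1} w_i w_{i+1} w_{i+2} w_{i+3} = 01010$. *)

theory Defs
  imports Complex_Main "HOL-Library.Extended_Real" "HOL-Library.Liminf_Limsup"
begin

(* An infinite binary word w = w_1 w_2 w_3 ... is modelled as w :: nat => bool,
   with letter w_i = 1 iff w i = True and w_i = 0 iff w i = False.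
   Only positions i >= 1 are used; the value w 0 is irrelevant. *)

definition zero_at :: "(nat \<Rightarrow> bool) \<Rightarrow> nat \<Rightarrow> bool" where
  "zero_at w i \<longleftrightarrow> \<not> w i"

definition Zpre :: "(nat \<Rightarrow> bool) \<Rightarrow> nat \<Rightarrow> nat set" where
  "Zpre w n = {i. 1 \<le> i \<and> i \<le> n \<and> zero_at w i}"

definition Ppre :: "(nat \<Rightarrow> bool) \<Rightarrow> nat \<Rightarrow> nat set" where
  "Ppre w n = {i. 2 \<le> i \<and>
     ((i \<le> n \<and> zero_at w (i-1) \<and> zero_at w i)
    \<or> (i + 2 \<le> n \<and> zero_at w (i-1) \<and> \<not> zero_at w i \<and> zero_at w (i+1) \<and> zero_at w (i+2))
    \<or> (i + 3 \<le> n \<and> zero_at w (i-1) \<and> \<not> zero_at w i \<and> zero_at w (i+1)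
          \<and> \<not> zero_at w (i+2) \<and> zero_at w (i+3)))}"

definition r_inf :: "(nat \<Rightarrow> bool) \<Rightarrow> ereal" where
  "r_inf w = liminf (\<lambda>n. ereal (real (card (Zpre w n)) / real n))"
definition r_sup :: "(nat \<Rightarrow> bool) \<Rightarrow> ereal" where
  "r_sup w = limsup (\<lambda>n. ereal (real (card (Zpre w n)) / real n))"
definition R_inf :: "(nat \<Rightarrow> bool) \<Rightarrow> ereal" where
  "R_inf w = liminf (\<lambda>n. ereal (real (card (Ppre w n)) / real n))"
definition R_sup :: "(nat \<Rightarrow> bool) \<Rightarrow> ereal" where
  "R_sup w = limsup (\<lambda>n. ereal (real (card (Ppre w n)) / real n))"

end

theory Submission
  imports Defs
begin


lemma Zfin: "finite (Zpre w n)"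
  by (rule finite_subset[of _ "{..n}"]) (auto simp: Zpre_def)

lemma Pfin: "finite (Ppre w n)"
  by (rule finite_subset[of _ "{..n}"]) (auto simp: Ppre_def)

lemma Zcard_le: "card (Zpre w n) \<le> n"
proof -
  have "Zpre w n \<subseteq> {1..n}" by (auto simp: Zpre_def)
  from card_mono[OF _ this] show ?thesis by simp
qed

lemma Zmono: "m \<le> n \<Longrightarrow> card (Zpre w m) \<le> card (Zpre w n)"
  by (rule card_mono[OF Zfin]) (auto simp: Zpre_def)

lemma P_le_Z: "card (Ppre w n) \<le> card (Zpre w n)"
proof -
  have "Ppre w n \<subseteq> Suc ` Zpre w n"
  proof
    fix i assume i: "i \<in> Ppre w n"
    hence "i - 1 \<in> Zpre w n" by (auto simp: Ppre_def Zpre_def)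
    moreover have "i = Suc (i - 1)" using i by (auto simp: Ppre_def)
    ultimately show "i \<in> Suc ` Zpre w n" by blast
  qed
  hence "card (Ppre w n) \<le> card (Suc ` Zpre w n)" by (intro card_mono finite_imageI Zfin)
  also have "\<dots> \<le> card (Zpre w n)" by (rule card_image_le[OF Zfin])
  finally show ?thesis .
qed

lemma P_lower: "5 * card (Zpre w n) \<le> 3 * card (Ppre w n) + 2 * n + 12"
proof -
  define Z where "Z = Zpre w n"
  define P where "P = Ppre w n"
  define U where "U = {j \<in> Z. Suc j \<notin> P}"
  define E where "E = {j. j \<le> n \<and> n < j + 4}"
  define A where "A = {j. 1 \<le> j \<and> j+2 \<le> n \<and> \<not> w j \<and> w (j+1) \<and> w (j+2)}"
  define B where "B = {j. 1 \<le> j \<and> j+4 \<le> n \<and> \<not> w j \<and> w (j+1) \<and> \<not> w (j+2) \<and> w (j+3) \<and> w (j+4)}"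
  define On where "On = {k. 1 \<le> k \<and> k \<le> n \<and> w k}"
  have fZ: "finite Z" unfolding Z_def by (rule Zfin)
  have fP: "finite P" unfolding P_def by (rule Pfin)
  have fA: "finite A" by (rule finite_subset[of _ "{..n}"]) (auto simp: A_def)
  have fB: "finite B" by (rule finite_subset[of _ "{..n}"]) (auto simp: B_def)
  have fO: "finite On" by (rule finite_subset[of _ "{..n}"]) (auto simp: On_def)
  have fE: "finite E" by (rule finite_subset[of _ "{..n}"]) (auto simp: E_def)
  have fU: "finite U" using fZ by (auto simp: U_def)
  have "Suc ` (Z - U) \<subseteq> P" by (auto simp: U_def)
  hence c1: "card (Z - U) \<le> card P"
    using card_mono[OF fP] card_image[of Suc "Z - U"] by (metis inj_Suc inj_on_subset subset_UNIV)
  have UZ: "U \<subseteq> Z" by (auto simp: U_def)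
  have c2: "card Z \<le> card (Z - U) + card U"
    using card_Diff_subset[OF _ UZ] card_mono[OF fZ UZ] fU by simp
  have "U \<subseteq> E \<union> A \<union> B"
  proof
    fix j assume j: "j \<in> U"
    show "j \<in> E \<union> A \<union> B"
    proof (cases "j + 4 \<le> n")
      case False
      with j show ?thesis by (auto simp: U_def Z_def Zpre_def E_def)
    next
      case True
      from j have z: "1 \<le> j" "\<not> w j" "Suc j \<notin> Ppre w n"
        by (auto simp: U_def Z_def P_def Zpre_def zero_at_def)
      from z True have "w (j+1)" "\<not> (\<not> w (j+2) \<and> \<not> w (j+3))"
          "\<not> (\<not> w (j+2) \<and> w (j+3) \<and> \<not> w (j+4))"
        by (auto simp: Ppre_def zero_at_def eval_nat_numeral)
      note f = this
      show ?thesis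
      proof (cases "w (j+2)")
        case True
        hence "j \<in> A" unfolding A_def using z f \<open>j+4 \<le> n\<close> by simp
        thus ?thesis by blast
      next
        case False
        hence "j \<in> B" unfolding B_def using z f \<open>j+4 \<le> n\<close> by simp
        thus ?thesis by blast
      qed
    qed
  qed
  hence "card U \<le> card (E \<union> A \<union> B)" by (intro card_mono) (use fE fA fB in auto)
  also have "\<dots> \<le> card E + card A + card B"
    by (meson add_le_mono card_Un_le le_refl order_trans)
  also have "card E \<le> 4"
  proof -
    have "E \<subseteq> (\<lambda>t. n - t) ` {..<4}"
    proof
      fix j assume "j \<in> E" hence "j = n - (n - j)" "n - j < 4" by (auto simp: E_def)
      thus "j \<in> (\<lambda>t. n - t) ` {..<4}" by blast
    qed
    from card_mono[OF _ this] card_image_le[of "{..<4::nat}" "\<lambda>t. n - t"] show ?thesis by simp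
  qed
  finally have c3: "card U \<le> 4 + card A + card B" by simp
  have "(\<lambda>j. j+2) ` B \<subseteq> A" by (auto simp: A_def B_def eval_nat_numeral)
  hence c4: "card B \<le> card A"
    using card_mono[OF fA] card_image[of "\<lambda>j. j+2" B] by (metis inj_on_def add_right_cancel)
  have dis1: "Suc ` A \<inter> (\<lambda>j. j+2) ` A = {}" by (auto simp: A_def)
  have dis2: "(Suc ` A \<union> (\<lambda>j. j+2) ` A) \<inter> Suc ` B = {}" by (auto simp: A_def B_def eval_nat_numeral)
  have "Suc ` A \<union> (\<lambda>j. j+2) ` A \<union> Suc ` B \<subseteq> On" by (auto simp: A_def B_def On_def eval_nat_numeral)
  hence "card (Suc ` A \<union> (\<lambda>j. j+2) ` A \<union> Suc ` B) \<le> card On" by (intro card_mono fO)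
  moreover have "card (Suc ` A \<union> (\<lambda>j. j+2) ` A \<union> Suc ` B) = 2 * card A + card B"
  proof -
    have i1: "card (Suc ` A) = card A" by (simp add: card_image)
    have i2: "card ((\<lambda>j. j+2) ` A) = card A" by (simp add: card_image inj_on_def)
    have i3: "card (Suc ` B) = card B" by (simp add: card_image)
    have "card (Suc ` A \<union> (\<lambda>j. j+2) ` A \<union> Suc ` B) = card (Suc ` A \<union> (\<lambda>j. j+2) ` A) + card (Suc ` B)"
      by (rule card_Un_disjoint[OF _ _ dis2]) (use fA fB in auto)
    moreover have "card (Suc ` A \<union> (\<lambda>j. j+2) ` A) = card (Suc ` A) + card ((\<lambda>j. j+2) ` A)"
      by (rule card_Un_disjoint[OF _ _ dis1]) (use fA in auto)
    ultimately show ?thesis using i1 i2 i3 by simp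
  qed
  ultimately have c5: "2 * card A + card B \<le> card On" by simp
  have "Z \<union> On = {1..n}" "Z \<inter> On = {}" by (auto simp: Z_def On_def Zpre_def zero_at_def)
  hence c6: "card Z + card On = n" using card_Un_disjoint[OF fZ fO] by simp
  from c1 c2 c3 c4 c5 c6 show ?thesis unfolding Z_def[symmetric] P_def[symmetric] by linarith
qed



lemma ereal_fin_bounds:
  fixes L :: ereal assumes "0 \<le> L" "L \<le> 1" obtains l where "L = ereal l"
  using assms by (cases L) auto

lemma eps_aux:
  fixes l e :: real and y :: ereal
  assumes "ereal (5/3*l + (-2/3 - e)) \<le> y"
  shows "(5 * ereal l - 2)/3 \<le> y + ereal e"
proof -
  have "(5 * ereal l - 2)/3 = ereal ((5*l - 2)/3)" by (simp add: divide_ereal_def)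
  thus ?thesis using assms by (cases y) auto
qed

lemma ev_lower:
  fixes z p :: "nat \<Rightarrow> real" and e :: real
  assumes lo: "\<And>n. n \<ge> 1 \<Longrightarrow> (5 * z n - 2)/3 - 4/real n \<le> p n" and e: "e > 0"
  shows "eventually (\<lambda>n. ereal (5/3) * ereal (z n) + ereal (-2/3 - e) \<le> ereal (p n)) sequentially"
proof -
  obtain N :: nat where N: "4/e < N" using reals_Archimedean2 by blast
  have "ereal (5/3) * ereal (z n) + ereal (-2/3 - e) \<le> ereal (p n)" if "n \<ge> N + 1" for n
  proof -
    have n1: "n \<ge> 1" "real n > 4/e" using that N by auto
    hence "4 / real n < e" using e by (simp add: field_simps)
    with lo[OF n1(1)] have "5/3 * z n + (-2/3 - e) \<le> p n" by (simp add: field_simps) 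
    thus ?thesis by simp
  qed
  thus ?thesis unfolding eventually_sequentially by blast
qed

lemma limits_part1:
  fixes z p :: "nat \<Rightarrow> real"
  assumes le: "\<And>n. p n \<le> z n" and lo: "\<And>n. n \<ge> 1 \<Longrightarrow> (5 * z n - 2)/3 - 4/real n \<le> p n"
    and b0: "\<And>n. 0 \<le> z n" and b1: "\<And>n. z n \<le> 1"
  shows "(5 * liminf (\<lambda>n. ereal (z n)) - 2)/3 \<le> liminf (\<lambda>n. ereal (p n))"
    "liminf (\<lambda>n. ereal (p n)) \<le> liminf (\<lambda>n. ereal (z n))"
    "(5 * limsup (\<lambda>n. ereal (z n)) - 2)/3 \<le> limsup (\<lambda>n. ereal (p n))"
    "limsup (\<lambda>n. ereal (p n)) \<le> limsup (\<lambda>n. ereal (z n))"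
proof -
  show "liminf (\<lambda>n. ereal (p n)) \<le> liminf (\<lambda>n. ereal (z n))"
    by (rule Liminf_mono) (use le in auto)
  show "limsup (\<lambda>n. ereal (p n)) \<le> limsup (\<lambda>n. ereal (z n))"
    by (rule Limsup_mono) (use le in auto)
  have i0: "0 \<le> liminf (\<lambda>n. ereal (z n))" by (rule Liminf_bounded) (use b0 in auto)
  have s1: "limsup (\<lambda>n. ereal (z n)) \<le> 1" by (rule Limsup_bounded) (use b1 in auto)
  have isu: "liminf (\<lambda>n. ereal (z n)) \<le> limsup (\<lambda>n. ereal (z n))" by (rule Liminf_le_Limsup) simp
  obtain l where l: "liminf (\<lambda>n. ereal (z n)) = ereal l"
    by (cases "liminf (\<lambda>n. ereal (z n))") (use i0 isu s1 in auto)
  obtain u where u: "limsup (\<lambda>n. ereal (z n)) = ereal u"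
    by (cases "limsup (\<lambda>n. ereal (z n))") (use i0 isu s1 in auto)
  show "(5 * liminf (\<lambda>n. ereal (z n)) - 2)/3 \<le> liminf (\<lambda>n. ereal (p n))"
  proof (rule ereal_le_epsilon2)
    fix e :: real assume e: "0 < e"
    have "liminf (\<lambda>n. ereal (5/3) * ereal (z n) + ereal (-2/3 - e)) \<le> liminf (\<lambda>n. ereal (p n))"
      by (rule Liminf_mono[OF ev_lower[OF lo e]])
    moreover have "liminf (\<lambda>n. ereal (5/3) * ereal (z n) + ereal (-2/3 - e))
        = ereal (5/3) * liminf (\<lambda>n. ereal (z n)) + ereal (-2/3 - e)"
    proof -
      have m: "liminf (\<lambda>n. ereal (5/3) * ereal (z n)) = ereal (5/3) * liminf (\<lambda>n. ereal (z n))"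
        by (rule Liminf_ereal_mult_left) simp_all
      have a: "liminf (\<lambda>n. ereal (5/3) * ereal (z n) + ereal (-2/3 - e)) = liminf (\<lambda>n. ereal (5/3) * ereal (z n)) + ereal (-2/3 - e)"
        by (rule Liminf_add_ereal_right) simp_all
      show ?thesis using a m by (simp only:)
    qed
    ultimately have "ereal (5/3*l + (-2/3 - e)) \<le> liminf (\<lambda>n. ereal (p n))" using l by simp
    thus "(5 * liminf (\<lambda>n. ereal (z n)) - 2)/3 \<le> liminf (\<lambda>n. ereal (p n)) + ereal e"
      unfolding l by (rule eps_aux)
  qed
  show "(5 * limsup (\<lambda>n. ereal (z n)) - 2)/3 \<le> limsup (\<lambda>n. ereal (p n))"
  proof (rule ereal_le_epsilon2)
    fix e :: real assume e: "0 < e"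
    have "limsup (\<lambda>n. ereal (5/3) * ereal (z n) + ereal (-2/3 - e)) \<le> limsup (\<lambda>n. ereal (p n))"
      by (rule Limsup_mono[OF ev_lower[OF lo e]])
    moreover have "limsup (\<lambda>n. ereal (5/3) * ereal (z n) + ereal (-2/3 - e))
        = ereal (5/3) * limsup (\<lambda>n. ereal (z n)) + ereal (-2/3 - e)"
    proof -
      have m: "limsup (\<lambda>n. ereal (5/3) * ereal (z n)) = ereal (5/3) * limsup (\<lambda>n. ereal (z n))"
        by (rule Limsup_ereal_mult_left) simp_all
      have a: "limsup (\<lambda>n. ereal (5/3) * ereal (z n) + ereal (-2/3 - e)) = limsup (\<lambda>n. ereal (5/3) * ereal (z n)) + ereal (-2/3 - e)"
        by (rule Limsup_add_ereal_right) simp_all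
      show ?thesis using a m by (simp only:)
    qed
    ultimately have "ereal (5/3*u + (-2/3 - e)) \<le> limsup (\<lambda>n. ereal (p n))" using u by simp
    thus "(5 * limsup (\<lambda>n. ereal (z n)) - 2)/3 \<le> limsup (\<lambda>n. ereal (p n)) + ereal e"
      unfolding u by (rule eps_aux)
  qed
qed



lemma conv_ratio:
  fixes f g :: "nat \<Rightarrow> real" and r :: real
  assumes b: "\<And>n. n \<ge> 1 \<Longrightarrow> \<bar>f n - r * n\<bar> \<le> g n" and g: "(\<lambda>n. g n / n) \<longlonglongrightarrow> 0"
  shows "liminf (\<lambda>n. ereal (f n / n)) = ereal r \<and> limsup (\<lambda>n. ereal (f n / n)) = ereal r"
proof -
  have ev1: "eventually (\<lambda>n. r - g n / n \<le> f n / n) sequentially"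
    unfolding eventually_sequentially
  proof (intro exI allI impI)
    fix n :: nat assume n: "n \<ge> 1"
    have "f n \<ge> r * n - g n" using b[OF n] by linarith
    hence "f n / n \<ge> (r * n - g n) / n" using n by (simp add: divide_right_mono)
    thus "r - g n / n \<le> f n / n" using n by (simp add: diff_divide_distrib)
  qed
  have ev2: "eventually (\<lambda>n. f n / n \<le> r + g n / n) sequentially"
    unfolding eventually_sequentially
  proof (intro exI allI impI)
    fix n :: nat assume n: "n \<ge> 1"
    have "f n \<le> r * n + g n" using b[OF n] by linarith
    hence "f n / n \<le> (r * n + g n) / n" using n by (simp add: divide_right_mono)
    thus "f n / n \<le> r + g n / n" using n by (simp add: add_divide_distrib)
  qed
  have "(\<lambda>n. r - g n / n) \<longlonglongrightarrow> r - 0" by (intro tendsto_intros g)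
  moreover have "(\<lambda>n. r + g n / n) \<longlonglongrightarrow> r + 0" by (intro tendsto_intros g)
  ultimately have "(\<lambda>n. f n / n) \<longlonglongrightarrow> r" using tendsto_sandwich[OF ev1 ev2] by simp
  hence "(\<lambda>n. ereal (f n / n)) \<longlonglongrightarrow> ereal r" by (rule tendsto_ereal)
  thus ?thesis using lim_imp_Liminf lim_imp_Limsup by (metis trivial_limit_sequentially)
qed

lemma block_sum:
  fixes b :: "nat \<Rightarrow> nat"
  assumes "\<And>m. b m \<le> b (Suc m)" "b 0 = 0"
  shows "card {j. 1 \<le> j \<and> j \<le> b M \<and> Q j} = (\<Sum>m<M. card {j. b m < j \<and> j \<le> b (Suc m) \<and> Q j})"
proof (induction M)
  case 0 thus ?case using assms by auto
next
  case (Suc M)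
  have "{j. 1 \<le> j \<and> j \<le> b (Suc M) \<and> Q j} = {j. 1 \<le> j \<and> j \<le> b M \<and> Q j} \<union> {j. b M < j \<and> j \<le> b (Suc M) \<and> Q j}"
    using assms(1)[of M] by auto
  moreover have "card ({j. 1 \<le> j \<and> j \<le> b M \<and> Q j} \<union> {j. b M < j \<and> j \<le> b (Suc M) \<and> Q j}) =
     card {j. 1 \<le> j \<and> j \<le> b M \<and> Q j} + card {j. b M < j \<and> j \<le> b (Suc M) \<and> Q j}"
    by (rule card_Un_disjoint) (auto intro: finite_subset[of _ "{..b M}"] finite_subset[of _ "{..b (Suc M)}"])
  ultimately show ?case using Suc by simp
qed

lemma sq_between: "\<exists>K::nat. K^2 \<le> n \<and> n < (Suc K)^2"
proof (induction n)
  case 0 show ?case by (intro exI[of _ 0]) simp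
next
  case (Suc n)
  then obtain K where K: "K^2 \<le> n" "n < (Suc K)^2" by blast
  show ?case
  proof (cases "Suc n < (Suc K)^2")
    case True thus ?thesis using K by (intro exI[of _ K]) auto
  next
    case False
    hence "Suc n = (Suc K)^2" using K by simp
    thus ?thesis by (intro exI[of _ "Suc K"]) (simp add: power2_eq_square)
  qed
qed

lemma P_ge_Z_trans:
  "card (Zpre w n) \<le> card (Ppre w n) + 1 + card {j. 1 \<le> j \<and> j < n \<and> \<not> w j \<and> w (Suc j)}"
proof -
  define Z where "Z = Zpre w n"
  define C where "C = {j \<in> Z. j < n \<and> \<not> w (Suc j)}"
  define T where "T = {j. 1 \<le> j \<and> j < n \<and> \<not> w j \<and> w (Suc j)}"
  have fZ: "finite Z" unfolding Z_def by (rule finite_subset[of _ "{..n}"]) (auto simp: Zpre_def)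
  have fC: "finite C" using fZ by (auto simp: C_def)
  have fT: "finite T" unfolding T_def by (rule finite_subset[of _ "{..n}"]) auto
  have "Suc ` C \<subseteq> Ppre w n" by (auto simp: C_def Z_def Zpre_def Ppre_def zero_at_def)
  hence c1: "card C \<le> card (Ppre w n)"
    using card_mono[OF Pfin] card_image[of Suc C] by (metis inj_Suc inj_on_subset subset_UNIV)
  have "Z \<subseteq> C \<union> {n} \<union> T" by (auto simp: C_def T_def Z_def Zpre_def zero_at_def)
  hence "card Z \<le> card (C \<union> {n} \<union> T)" by (intro card_mono) (use fC fT in auto)
  also have "\<dots> \<le> card (C \<union> {n}) + card T" by (rule card_Un_le)
  also have "card (C \<union> {n}) \<le> card C + card {n}" by (rule card_Un_le)
  hence "card (C \<union> {n}) + card T \<le> card C + 1 + card T" by simp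
  finally show ?thesis using c1 unfolding Z_def T_def by linarith
qed



lemma sqrt_ratio_lim: "(\<lambda>n. C * sqrt (real n) / real n) \<longlonglongrightarrow> 0"
proof -
  have eq: "C * sqrt (real n) / real n = C * sqrt (inverse (real n))" for n
  proof -
    have "sqrt (real n) / real n = inverse (real n / sqrt (real n))" by (rule inverse_divide[symmetric])
    also have "real n / sqrt (real n) = sqrt (real n)" by (rule real_div_sqrt) simp
    also have "inverse (sqrt (real n)) = sqrt (inverse (real n))" by (simp add: real_sqrt_inverse)
    finally show ?thesis by (simp only: times_divide_eq_right[symmetric])
  qed
  have "(\<lambda>n. C * sqrt (inverse (real n))) \<longlonglongrightarrow> C * sqrt 0"
    by (rule tendsto_mult_left, rule tendsto_real_sqrt, rule tendsto_inverse_0_at_top, rule filterlim_real_sequentially)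
  thus ?thesis unfolding eq by simp
qed

definition c3 :: "real \<Rightarrow> nat \<Rightarrow> nat" where
  "c3 r k = nat (\<lfloor>r * real ((k+1)^2)\<rfloor> - \<lfloor>r * real (k^2)\<rfloor>)"

definition w3 :: "real \<Rightarrow> nat \<Rightarrow> bool" where
  "w3 r i = (\<not> (\<exists>k. k^2 < i \<and> i \<le> k^2 + c3 r k))"

lemma c3_props:
  assumes "0 \<le> r" "r \<le> 1"
  shows "int (c3 r k) = \<lfloor>r * real ((k+1)^2)\<rfloor> - \<lfloor>r * real (k^2)\<rfloor>" "c3 r k \<le> 2*k+1"
proof -
  have e: "real ((k+1)^2) = real (k^2) + (2*k+1)" by (simp add: power2_eq_square algebra_simps)
  have "r * real (k^2) \<le> r * real ((k+1)^2)" using assms by (intro mult_left_mono) auto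
  hence m: "\<lfloor>r * real (k^2)\<rfloor> \<le> \<lfloor>r * real ((k+1)^2)\<rfloor>" by (rule floor_mono)
  thus "int (c3 r k) = \<lfloor>r * real ((k+1)^2)\<rfloor> - \<lfloor>r * real (k^2)\<rfloor>" by (simp add: c3_def)
  have "r * real ((k+1)^2) \<le> r * real (k^2) + real (2*k+1)"
    unfolding e using mult_left_le_one_le[of "real (2*k+1)" r] assms by (simp add: algebra_simps)
  hence "\<lfloor>r * real ((k+1)^2)\<rfloor> \<le> \<lfloor>r * real (k^2) + real (2*k+1)\<rfloor>" by (rule floor_mono)
  hence "\<lfloor>r * real ((k+1)^2)\<rfloor> \<le> \<lfloor>r * real (k^2)\<rfloor> + int (2*k+1)"
    by (metis floor_add_int of_int_of_nat_eq)
  thus "c3 r k \<le> 2*k+1" unfolding c3_def by linarith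
qed

lemma sq_less_mono: "(a::nat)^2 < b^2 \<Longrightarrow> a < b"
  using power_less_imp_less_base by blast

lemma w3_block:
  assumes "0 \<le> r" "r \<le> 1" "k^2 < i" "i \<le> (Suc k)^2"
  shows "\<not> w3 r i \<longleftrightarrow> i \<le> k^2 + c3 r k"
proof
  assume "\<not> w3 r i"
  then obtain k' where k': "k'^2 < i" "i \<le> k'^2 + c3 r k'" unfolding w3_def by blast
  have "k'^2 + c3 r k' \<le> (Suc k')^2" using c3_props(2)[OF assms(1,2), of k'] by (simp add: power2_eq_square)
  hence "k'^2 < (Suc k)^2" "k^2 < (Suc k')^2" using k' assms by linarith+
  hence "k' < Suc k" "k < Suc k'" by (auto dest: sq_less_mono)
  hence "k' = k" by simp
  thus "i \<le> k^2 + c3 r k" using k' by simp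
next
  assume "i \<le> k^2 + c3 r k" thus "\<not> w3 r i" unfolding w3_def using assms by blast
qed

lemma Z3_sq:
  assumes "0 \<le> r" "r \<le> 1"
  shows "int (card (Zpre (w3 r) (K^2))) = \<lfloor>r * real (K^2)\<rfloor>"
proof -
  have "card (Zpre (w3 r) (K^2)) = (\<Sum>k<K. card {j. k^2 < j \<and> j \<le> (Suc k)^2 \<and> zero_at (w3 r) j})"
    unfolding Zpre_def by (rule block_sum[where b = "\<lambda>k. k^2"]) (auto simp: power2_eq_square)
  also have "\<dots> = (\<Sum>k<K. c3 r k)"
  proof (rule sum.cong)
    fix k assume "k \<in> {..<K}"
    have "{j. k^2 < j \<and> j \<le> (Suc k)^2 \<and> zero_at (w3 r) j} = {k^2<..k^2 + c3 r k}"
    proof (rule set_eqI)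
      fix j
      have sq: "(Suc k)^2 = k^2 + 2*k + 1" by (simp add: power2_eq_square)
      show "j \<in> {j. k^2 < j \<and> j \<le> (Suc k)^2 \<and> zero_at (w3 r) j} \<longleftrightarrow> j \<in> {k^2<..k^2 + c3 r k}"
        using w3_block[OF assms, of k j] c3_props(2)[OF assms, of k] unfolding sq zero_at_def
        by auto
    qed
    thus "card {j. k^2 < j \<and> j \<le> (Suc k)^2 \<and> zero_at (w3 r) j} = c3 r k" by simp
  qed simp
  finally have "int (card (Zpre (w3 r) (K^2))) = (\<Sum>k<K. int (c3 r k))" by simp
  also have "\<dots> = (\<Sum>k<K. \<lfloor>r * real ((Suc k)^2)\<rfloor> - \<lfloor>r * real (k^2)\<rfloor>)"
    using c3_props(1)[OF assms] by simp
  also have "\<dots> = \<lfloor>r * real (K^2)\<rfloor>"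
    by (subst sum_lessThan_telescope[where f = "\<lambda>k. \<lfloor>r * real (k^2)\<rfloor>"]) simp
  finally show ?thesis .
qed



lemma w3_bounds:
  assumes r: "0 \<le> r" "r \<le> 1" and n: "n \<ge> 1"
  shows "\<bar>real (card (Zpre (w3 r) n)) - r * n\<bar> \<le> 6 * sqrt n"
    "\<bar>real (card (Ppre (w3 r) n)) - r * n\<bar> \<le> 6 * sqrt n"
proof -
  obtain K where K: "K^2 \<le> n" "n < (Suc K)^2" using sq_between by blast
  have sq: "(Suc K)^2 = K^2 + 2*K + 1" by (simp add: power2_eq_square)
  have Ks: "real K \<le> sqrt n" using K(1) by (intro real_le_rsqrt) (metis of_nat_le_iff of_nat_power)
  have s1: "1 \<le> sqrt (real n)" using n by (intro real_sqrt_ge_one) simp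
  have z1: "card (Zpre (w3 r) (K^2)) \<le> card (Zpre (w3 r) n)" using K by (intro Zmono) simp
  have z2: "card (Zpre (w3 r) n) \<le> card (Zpre (w3 r) ((Suc K)^2))" using K by (intro Zmono) simp
  have e1: "real (card (Zpre (w3 r) (K^2))) = real_of_int \<lfloor>r * real (K^2)\<rfloor>"
    using Z3_sq[OF r, of K] by (metis of_int_of_nat_eq)
  have e2: "real (card (Zpre (w3 r) ((Suc K)^2))) = real_of_int \<lfloor>r * real ((Suc K)^2)\<rfloor>"
    using Z3_sq[OF r, of "Suc K"] by (metis of_int_of_nat_eq)
  have f1: "r * real (K^2) - 1 < real_of_int \<lfloor>r * real (K^2)\<rfloor>" by simp
  have f2: "real_of_int \<lfloor>r * real ((Suc K)^2)\<rfloor> \<le> r * real ((Suc K)^2)" by simp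
  have n1: "real n \<le> real (K^2) + 2 * real K" using K sq by linarith
  have n2: "real (K^2) \<le> real n" using K by simp
  have "r * real n \<le> r * real (K^2) + 2 * real K"
  proof -
    have a: "r * real n \<le> r * (real (K^2) + 2 * real K)" by (rule mult_left_mono[OF n1 r(1)])
    have b: "r * (2 * real K) \<le> 2 * real K" using r by (intro mult_left_le_one_le) auto
    from a have "r * real n \<le> r * real (K^2) + r * (2 * real K)" by (simp only: distrib_left)
    with b show ?thesis by linarith
  qed
  moreover have "r * real ((Suc K)^2) \<le> r * real n + (2 * real K + 1)"
  proof -
    have "real ((Suc K)^2) = real (K^2) + (2 * real K + 1)" unfolding sq by simp
    hence "r * real ((Suc K)^2) = r * real (K^2) + r * (2 * real K + 1)" by (simp add: algebra_simps)
    moreover have "r * (2 * real K + 1) \<le> 2 * real K + 1" using r by (intro mult_left_le_one_le) auto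
    moreover have "r * real (K^2) \<le> r * real n" using n2 r by (intro mult_left_mono) auto
    ultimately show ?thesis by linarith
  qed
  ultimately have Zb: "\<bar>real (card (Zpre (w3 r) n)) - r * n\<bar> \<le> 2 * real K + 1"
    using z1 z2 e1 e2 f1 f2 by (smt (verit) of_nat_le_iff)
  thus "\<bar>real (card (Zpre (w3 r) n)) - r * n\<bar> \<le> 6 * sqrt n" using Ks s1 by linarith
  define T where "T = {j. 1 \<le> j \<and> j < n \<and> \<not> w3 r j \<and> w3 r (Suc j)}"
  have "T \<subseteq> (\<lambda>k. k^2 + c3 r k) ` {..K}"
  proof
    fix j assume j: "j \<in> T"
    then obtain k where k: "k^2 < j" "j \<le> k^2 + c3 r k" unfolding T_def w3_def by blast
    have "\<not> (Suc j \<le> k^2 + c3 r k)" using j k unfolding T_def w3_def by auto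
    hence jk: "j = k^2 + c3 r k" using k by linarith
    have "j < n" using j unfolding T_def by simp
    hence "k^2 < (Suc K)^2" using k K by linarith
    hence "k \<le> K" using sq_less_mono by fastforce
    thus "j \<in> (\<lambda>k. k^2 + c3 r k) ` {..K}" using jk by blast
  qed
  hence "card T \<le> card ((\<lambda>k. k^2 + c3 r k) ` {..K})" by (intro card_mono) auto
  also have "\<dots> \<le> K + 1" using card_image_le[of "{..K}" "\<lambda>k. k^2 + c3 r k"] by simp
  finally have Tb: "card T \<le> K + 1" .
  have "card (Zpre (w3 r) n) \<le> card (Ppre (w3 r) n) + 1 + card T"
    unfolding T_def by (rule P_ge_Z_trans)
  hence "real (card (Zpre (w3 r) n)) \<le> real (card (Ppre (w3 r) n)) + real K + 2" using Tb by linarith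
  moreover have "real (card (Ppre (w3 r) n)) \<le> real (card (Zpre (w3 r) n))" using P_le_Z by simp
  ultimately show "\<bar>real (card (Ppre (w3 r) n)) - r * n\<bar> \<le> 6 * sqrt n" using Zb Ks s1 by linarith
qed

lemma part3:
  assumes "0 \<le> r" "r \<le> 1"
  shows "r_inf (w3 r) = ereal r \<and> r_sup (w3 r) = ereal r \<and> R_inf (w3 r) = ereal r \<and> R_sup (w3 r) = ereal r"
  using conv_ratio[of "\<lambda>n. real (card (Zpre (w3 r) n))" r "\<lambda>n. 6 * sqrt n", OF w3_bounds(1)[OF assms] sqrt_ratio_lim]
    conv_ratio[of "\<lambda>n. real (card (Ppre (w3 r) n))" r "\<lambda>n. 6 * sqrt n", OF w3_bounds(2)[OF assms] sqrt_ratio_lim]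
  unfolding r_inf_def r_sup_def R_inf_def R_sup_def by simp



definition sel :: "real \<Rightarrow> nat \<Rightarrow> bool" where
  "sel a m = (\<lfloor>a * real (Suc m)\<rfloor> \<noteq> \<lfloor>a * real m\<rfloor>)"

definition w2 :: "real \<Rightarrow> nat \<Rightarrow> bool" where
  "w2 a i = (\<not> sel a ((i-1) div 5) \<and> (i-1) mod 5 \<in> {1,3,4})"

lemma dm5: "c < 5 \<Longrightarrow> (5*m + c) div 5 = (m::nat) \<and> (5*m + c) mod 5 = c" by simp

lemma w2_0: "\<not> w2 a (5*m+1)" unfolding w2_def using dm5[of 0 m] by simp
lemma w2_1: "w2 a (5*m+2) = (\<not> sel a m)" unfolding w2_def using dm5[of 1 m] by simp
lemma w2_2: "\<not> w2 a (5*m+3)" unfolding w2_def using dm5[of 2 m] by simp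
lemma w2_3: "w2 a (5*m+4) = (\<not> sel a m)" unfolding w2_def using dm5[of 3 m] by simp
lemma w2_4: "w2 a (5*m+5) = (\<not> sel a m)" unfolding w2_def using dm5[of 4 m] by simp

lemma sel_tele:
  assumes "0 \<le> a" "a \<le> 1"
  shows "int (\<Sum>m<M. (if sel a m then 1 else 0)) = \<lfloor>a * real M\<rfloor>"
proof (induction M)
  case 0 show ?case by simp
next
  case (Suc M)
  have m: "\<lfloor>a * real M\<rfloor> \<le> \<lfloor>a * real (Suc M)\<rfloor>" using assms by (intro floor_mono mult_left_mono) auto
  have "a * real (Suc M) \<le> a * real M + 1" using assms by (simp add: algebra_simps)
  hence "\<lfloor>a * real (Suc M)\<rfloor> \<le> \<lfloor>a * real M + 1\<rfloor>" by (rule floor_mono)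
  hence m2: "\<lfloor>a * real (Suc M)\<rfloor> \<le> \<lfloor>a * real M\<rfloor> + 1" by simp
  show ?case using Suc m m2 unfolding sel_def by auto
qed

lemma range5: "{j. 5*m < j \<and> j \<le> 5 * Suc m \<and> Q j} = {j \<in> {5*m+1, 5*m+2, 5*m+3, 5*m+4, 5*m+5}. Q j}"
  by auto

lemma card5: "card {5*m+1, 5*m+2, 5*m+3, 5*m+4, 5*m+(5::nat)} = 5" by simp
lemma card2: "card {5*m+1, 5*m+(3::nat)} = 2" by simp

lemma Z2_block: "card {j. 5*m < j \<and> j \<le> 5 * Suc m \<and> zero_at (w2 a) j} = (if sel a m then 5 else 2)"
proof (cases "sel a m")
  case True
  hence "{j \<in> {5*m+1, 5*m+2, 5*m+3, 5*m+4, 5*m+5}. zero_at (w2 a) j} = {5*m+1, 5*m+2, 5*m+3, 5*m+4, 5*m+5}"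
    using w2_0[of a m] w2_1[of a m] w2_2[of a m] w2_3[of a m] w2_4[of a m] unfolding zero_at_def by blast
  thus ?thesis unfolding range5 using True card5 by simp
next
  case False
  hence "{j \<in> {5*m+1, 5*m+2, 5*m+3, 5*m+4, 5*m+5}. zero_at (w2 a) j} = {5*m+1, 5*m+3}"
    using w2_0[of a m] w2_1[of a m] w2_2[of a m] w2_3[of a m] w2_4[of a m] unfolding zero_at_def by blast
  thus ?thesis unfolding range5 using False card2 by simp
qed

lemma S2_block: "card {j. 5*m < j \<and> j \<le> 5 * Suc m \<and> sel a ((j-1) div 5)} = (if sel a m then 5 else 0)"
proof -
  have d: "(5*m+1-1) div 5 = m" "(5*m+2-1) div 5 = m" "(5*m+3-1) div 5 = m" "(5*m+4-1) div 5 = m"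
    "(5*m+5-1) div 5 = m" using dm5[of 0 m] dm5[of 1 m] dm5[of 2 m] dm5[of 3 m] dm5[of 4 m] by simp_all
  show ?thesis
  proof (cases "sel a m")
    case True
    hence "{j \<in> {5*m+1, 5*m+2, 5*m+3, 5*m+4, 5*m+5}. sel a ((j-1) div 5)} = {5*m+1, 5*m+2, 5*m+3, 5*m+4, 5*m+5}"
      using d by auto
    thus ?thesis unfolding range5 using True card5 by simp
  next
    case False
    hence "{j \<in> {5*m+1, 5*m+2, 5*m+3, 5*m+4, 5*m+5}. sel a ((j-1) div 5)} = {}"
      using d by auto
    thus ?thesis unfolding range5 using False by simp
  qed
qed



lemma Z2_5M:
  assumes "0 \<le> a" "a \<le> 1"
  shows "real (card (Zpre (w2 a) (5*M))) = 2 * M + 3 * real_of_int \<lfloor>a * real M\<rfloor>"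
proof -
  have "card (Zpre (w2 a) (5*M)) = (\<Sum>m<M. card {j. 5*m < j \<and> j \<le> 5 * Suc m \<and> zero_at (w2 a) j})"
    unfolding Zpre_def by (rule block_sum[where b = "\<lambda>m. 5*m"]) auto
  also have "\<dots> = (\<Sum>m<M. 2 + 3 * (if sel a m then 1 else 0))" unfolding Z2_block by (intro sum.cong) auto
  also have "\<dots> = (\<Sum>m<M. 2) + (\<Sum>m<M. 3 * (if sel a m then 1 else 0))" by (rule sum.distrib)
  also have "\<dots> = 2 * M + 3 * (\<Sum>m<M. (if sel a m then 1 else 0))" by (simp only: sum_distrib_left[symmetric]) simp
  finally have "int (card (Zpre (w2 a) (5*M))) = 2 * int M + 3 * int (\<Sum>m<M. (if sel a m then 1 else 0))" by simp
  also have "\<dots> = 2 * int M + 3 * \<lfloor>a * real M\<rfloor>" using sel_tele[OF assms] by simp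
  finally have h: "int (card (Zpre (w2 a) (5*M))) = 2 * int M + 3 * \<lfloor>a * real M\<rfloor>" .
  show ?thesis using arg_cong[OF h, of real_of_int] by simp
qed

lemma S2_5M:
  assumes "0 \<le> a" "a \<le> 1"
  shows "real (card {j. 1 \<le> j \<and> j \<le> 5*M \<and> sel a ((j-1) div 5)}) = 5 * real_of_int \<lfloor>a * real M\<rfloor>"
proof -
  have "card {j. 1 \<le> j \<and> j \<le> 5*M \<and> sel a ((j-1) div 5)} = (\<Sum>m<M. card {j. 5*m < j \<and> j \<le> 5 * Suc m \<and> sel a ((j-1) div 5)})"
    by (rule block_sum[where b = "\<lambda>m. 5*m"]) auto
  also have "\<dots> = (\<Sum>m<M. 5 * (if sel a m then 1 else 0))" unfolding S2_block by (intro sum.cong) auto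
  also have "\<dots> = 5 * (\<Sum>m<M. (if sel a m then 1 else 0))" by (simp add: sum_distrib_left)
  finally have "int (card {j. 1 \<le> j \<and> j \<le> 5*M \<and> sel a ((j-1) div 5)}) = 5 * int (\<Sum>m<M. (if sel a m then 1 else 0))" by simp
  also have "\<dots> = 5 * \<lfloor>a * real M\<rfloor>" using sel_tele[OF assms] by simp
  finally have h: "int (card {j. 1 \<le> j \<and> j \<le> 5*M \<and> sel a ((j-1) div 5)}) = 5 * \<lfloor>a * real M\<rfloor>" .
  show ?thesis using arg_cong[OF h, of real_of_int] by simp
qed



lemma P2_sel:
  assumes i: "i \<in> Ppre (w2 a) n"
  shows "sel a ((i - 2) div 5)"
proof (rule ccontr)
  assume ns: "\<not> sel a ((i - 2) div 5)"
  define m where "m = (i - 2) div 5"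
  define t where "t = (i - 2) mod 5"
  have i2: "2 \<le> i" using i by (simp add: Ppre_def)
  have ieq: "i = 5*m + t + 2" using i2 unfolding m_def t_def by simp
  have t5: "t < 5" unfolding t_def by simp
  have z: "\<not> w2 a (i - 1)" using i unfolding Ppre_def zero_at_def by blast
  have K: "\<not> w2 a i \<or> (\<not> w2 a (i+1) \<and> \<not> w2 a (i+2)) \<or> (\<not> w2 a (i+1) \<and> \<not> w2 a (i+3))"
    using i unfolding Ppre_def zero_at_def by blast
  have nsm: "\<not> sel a m" using ns m_def by simp
  from t5 have "t = 0 \<or> t = 1 \<or> t = 2 \<or> t = 3 \<or> t = 4" by auto
  thus False
  proof (elim disjE)
    assume "t = 0"
    hence "i = 5*m+2" "i+2 = 5*m+4" "i+3 = 5*m+5" using ieq by simp_all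
    thus False using K nsm w2_1[of a m] w2_3[of a m] w2_4[of a m] by metis
  next
    assume "t = 1"
    hence "i - 1 = 5*m+2" using ieq by simp
    thus False using z nsm w2_1[of a m] by metis
  next
    assume "t = 2"
    hence "i = 5*m+4" "i+1 = 5*m+5" using ieq by simp_all
    thus False using K nsm w2_3[of a m] w2_4[of a m] by metis
  next
    assume "t = 3"
    hence "i - 1 = 5*m+4" using ieq by simp
    thus False using z nsm w2_3[of a m] by metis
  next
    assume "t = 4"
    hence "i - 1 = 5*m+5" using ieq by simp
    thus False using z nsm w2_4[of a m] by metis
  qed
qed



lemma part1:
  "(5 * r_inf w - 2) / 3 \<le> R_inf w \<and> R_inf w \<le> r_inf w \<and>
   (5 * r_sup w - 2) / 3 \<le> R_sup w \<and> R_sup w \<le> r_sup w"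
proof -
  define z where "z n = real (card (Zpre w n)) / real n" for n
  define p where "p n = real (card (Ppre w n)) / real n" for n
  have le: "p n \<le> z n" for n unfolding p_def z_def
    by (rule divide_right_mono) (use P_le_Z[of w n] in auto)
  have lo: "(5 * z n - 2)/3 - 4/real n \<le> p n" if n: "n \<ge> 1" for n
  proof -
    have np: "real n > 0" using n by simp
    have "5 * real (card (Zpre w n)) \<le> 3 * real (card (Ppre w n)) + 2 * real n + 12"
    proof -
      have "real (5 * card (Zpre w n)) \<le> real (3 * card (Ppre w n) + 2 * n + 12)"
        using P_lower[of w n] by (simp only: of_nat_le_iff)
      thus ?thesis by simp
    qed
    hence "5 * real (card (Zpre w n)) - 2 * real n - 12 \<le> 3 * real (card (Ppre w n))" by linarith
    hence "(5 * real (card (Zpre w n)) - 2 * real n - 12) / (3 * real n) \<le> 3 * real (card (Ppre w n)) / (3 * real n)"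
      using np by (intro divide_right_mono) auto
    moreover have "(5 * z n - 2)/3 - 4/real n = (5 * real (card (Zpre w n)) - 2 * real n - 12) / (3 * real n)"
      unfolding z_def using np by (simp add: field_simps)
    moreover have "3 * real (card (Ppre w n)) / (3 * real n) = p n" unfolding p_def by simp
    ultimately show ?thesis by simp
  qed
  have b0: "0 \<le> z n" for n unfolding z_def by simp
  have b1: "z n \<le> 1" for n unfolding z_def
    using Zcard_le[of w n] by (cases "n = 0") (auto simp: divide_le_eq_1)
  note L = limits_part1[of p z, OF le lo b0 b1]
  show ?thesis unfolding r_inf_def r_sup_def R_inf_def R_sup_def
    using L unfolding z_def p_def by simp
qed

lemma part2:
  assumes r: "2/5 \<le> r" "r \<le> 1"
  shows "\<exists>w :: nat \<Rightarrow> bool. r_inf w = ereal r \<and> r_sup w = ereal r \<and>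
               R_inf w = ereal ((5 * r - 2) / 3) \<and> R_sup w = ereal ((5 * r - 2) / 3)"
proof -
  define a where "a = (5 * r - 2) / 3"
  have a: "0 \<le> a" "a \<le> 1" using r unfolding a_def by simp_all
  have ra: "r = (2 + 3 * a) / 5" unfolding a_def by (simp add: field_simps)
  define w where "w = w2 a"
  have Zb: "\<bar>real (card (Zpre w n)) - r * n\<bar> \<le> 8" for n
  proof -
    define M where "M = n div 5"
    have nM: "5 * M \<le> n" "n < 5 * Suc M" unfolding M_def by simp_all
    have z1: "card (Zpre w (5*M)) \<le> card (Zpre w n)" using nM by (intro Zmono) simp
    have z2: "card (Zpre w n) \<le> card (Zpre w (5 * Suc M))" using nM by (intro Zmono) simp
    have e1: "real (card (Zpre w (5*M))) = 2 * M + 3 * real_of_int \<lfloor>a * real M\<rfloor>"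
      using Z2_5M[OF a, of M] unfolding w_def by simp
    have e2: "real (card (Zpre w (5 * Suc M))) = 2 * Suc M + 3 * real_of_int \<lfloor>a * real (Suc M)\<rfloor>"
      using Z2_5M[OF a, of "Suc M"] unfolding w_def by simp
    have f1: "a * real M - 1 < real_of_int \<lfloor>a * real M\<rfloor>" by simp
    have f2: "real_of_int \<lfloor>a * real (Suc M)\<rfloor> \<le> a * real (Suc M)" by simp
    have rn1: "r * real n \<ge> r * (5 * real M)" using nM r by (intro mult_left_mono) auto
    have rn2: "r * real n \<le> r * (5 * real M + 5)" using nM r by (intro mult_left_mono) auto
    have "r * (5 * real M) = 2 * real M + 3 * (a * real M)"
      "r * (5 * real M + 5) = 2 * real (Suc M) + 3 * (a * real (Suc M))"
      unfolding ra by (simp_all add: field_simps)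
    moreover have "real (card (Zpre w (5*M))) \<le> real (card (Zpre w n))" using z1 by simp
    moreover have "real (card (Zpre w n)) \<le> real (card (Zpre w (5 * Suc M)))" using z2 by simp
    moreover have "r * 5 \<le> 5" using r by simp
    moreover have "real (2*M) = 2 * real M" "real (2 * Suc M) = 2 * real (Suc M)" by simp_all
    moreover have "r * (5 * real M + 5) = r * (5 * real M) + r * 5" by (simp add: algebra_simps)
    ultimately have "real (card (Zpre w n)) \<ge> r * real n - 8" "real (card (Zpre w n)) \<le> r * real n + 8"
      using e1 e2 f1 f2 rn1 rn2 by linarith+
    thus ?thesis by linarith
  qed
  have Pb: "real (card (Ppre w n)) \<le> a * n + 5" for n
  proof -
    define M where "M = n div 5"
    have nM: "n \<le> 5 * Suc M" unfolding M_def by simp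
    define S where "S = {j. 1 \<le> j \<and> j \<le> 5 * Suc M \<and> sel a ((j-1) div 5)}"
    have "Ppre w n \<subseteq> Suc ` S"
    proof
      fix i assume i: "i \<in> Ppre w n"
      have i2: "2 \<le> i" "i \<le> n" using i by (auto simp: Ppre_def)
      have "sel a ((i - 2) div 5)" using P2_sel i unfolding w_def by blast
      moreover have "i - 1 - 1 = i - 2" by simp
      ultimately have "i - 1 \<in> S" unfolding S_def using i2 nM by (simp only: mem_Collect_eq) (intro conjI; linarith?; simp)
      moreover have "i = Suc (i - 1)" using i2 by simp
      ultimately show "i \<in> Suc ` S" by blast
    qed
    hence "card (Ppre w n) \<le> card (Suc ` S)"
      by (intro card_mono) (auto simp: S_def intro: finite_subset[of _ "{..5 * Suc M}"])
    also have "\<dots> \<le> card S" by (rule card_image_le) (auto simp: S_def intro: finite_subset[of _ "{..5 * Suc M}"])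
    finally have "real (card (Ppre w n)) \<le> real (card S)" by simp
    also have "\<dots> = 5 * real_of_int \<lfloor>a * real (Suc M)\<rfloor>" unfolding S_def by (rule S2_5M[OF a])
    also have "\<dots> \<le> 5 * (a * real (Suc M))" by simp
    also have "\<dots> \<le> a * n + 5"
    proof -
      have "5 * real (Suc M) \<le> real n + 5" unfolding M_def by simp
      hence "a * (5 * real (Suc M)) \<le> a * (real n + 5)" using a by (intro mult_left_mono) auto
      thus ?thesis using a by (simp add: algebra_simps)
    qed
    finally show ?thesis .
  qed
  have rr: "r_inf w = ereal r \<and> r_sup w = ereal r"
    unfolding r_inf_def r_sup_def
    by (rule conv_ratio[of _ r "\<lambda>n. 8"]) (use Zb lim_const_over_n[of 8] in auto)
  have up: "R_sup w \<le> ereal a"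
  proof -
    have "R_sup w \<le> limsup (\<lambda>n. ereal (a + 5 / real n))"
      unfolding R_sup_def
    proof (rule Limsup_mono)
      show "\<forall>\<^sub>F n in sequentially. ereal (real (card (Ppre w n)) / real n) \<le> ereal (a + 5 / real n)"
        unfolding eventually_sequentially
      proof (intro exI allI impI)
        fix n :: nat assume n: "n \<ge> 1"
        have "real (card (Ppre w n)) / real n \<le> (a * n + 5) / real n"
          using Pb[of n] n by (intro divide_right_mono) auto
        also have "\<dots> = a + 5 / real n" using n by (simp add: field_simps)
        finally show "ereal (real (card (Ppre w n)) / real n) \<le> ereal (a + 5 / real n)" by simp
      qed
    qed
    also have "limsup (\<lambda>n. ereal (a + 5 / real n)) = ereal a"
    proof (rule lim_imp_Limsup)
      have "(\<lambda>n. a + 5 / real n) \<longlonglongrightarrow> a + 0" by (intro tendsto_intros)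
      thus "(\<lambda>n. ereal (a + 5 / real n)) \<longlonglongrightarrow> ereal a" by (intro tendsto_ereal) simp
    qed simp
    finally show ?thesis .
  qed
  have lo: "ereal a \<le> R_inf w"
  proof -
    have "(5 * r_inf w - 2) / 3 \<le> R_inf w" using part1[of w] by blast
    moreover have "(5 * r_inf w - 2) / 3 = ereal a" using rr unfolding a_def by (simp add: divide_ereal_def)
    ultimately show ?thesis by simp
  qed
  have "R_inf w \<le> R_sup w" unfolding R_inf_def R_sup_def by (rule Liminf_le_Limsup) simp
  hence "R_inf w = ereal a" "R_sup w = ereal a" using up lo by auto
  thus ?thesis using rr unfolding a_def by blast
qed


theorem theorem3p1:
  shows "(\<forall>w :: nat \<Rightarrow> bool.
            (5 * r_inf w - 2) / 3 \<le> R_inf w \<and> R_inf w \<le> r_inf w \<and>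
            (5 * r_sup w - 2) / 3 \<le> R_sup w \<and> R_sup w \<le> r_sup w)
       \<and> (\<forall>r :: real. 2/5 \<le> r \<and> r \<le> 1 \<longrightarrow>
            (\<exists>w :: nat \<Rightarrow> bool. r_inf w = ereal r \<and> r_sup w = ereal r \<and>
               R_inf w = ereal ((5 * r - 2) / 3) \<and> R_sup w = ereal ((5 * r - 2) / 3)))
       \<and> (\<forall>r :: real. 0 \<le> r \<and> r \<le> 1 \<longrightarrow>
            (\<exists>w :: nat \<Rightarrow> bool. r_inf w = ereal r \<and> r_sup w = ereal r \<and>
               R_inf w = ereal r \<and> R_sup w = ereal r))"
proof (intro conjI)
  show "\<forall>w :: nat \<Rightarrow> bool.
            (5 * r_inf w - 2) / 3 \<le> R_inf w \<and> R_inf w \<le> r_inf w \<and>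
            (5 * r_sup w - 2) / 3 \<le> R_sup w \<and> R_sup w \<le> r_sup w"
    using part1 by blast
  show "\<forall>r :: real. 2/5 \<le> r \<and> r \<le> 1 \<longrightarrow>
            (\<exists>w :: nat \<Rightarrow> bool. r_inf w = ereal r \<and> r_sup w = ereal r \<and>
               R_inf w = ereal ((5 * r - 2) / 3) \<and> R_sup w = ereal ((5 * r - 2) / 3))"
    using part2 by blast
  show "\<forall>r :: real. 0 \<le> r \<and> r \<le> 1 \<longrightarrow>
            (\<exists>w :: nat \<Rightarrow> bool. r_inf w = ereal r \<and> r_sup w = ereal r \<and>
               R_inf w = ereal r \<and> R_sup w = ereal r)"
    using part3 by blast
qed

end
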